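(* Let $H$ be a real Hilbert space, $A:H\to H$ bounded linear, $f\in H$ such that $Au=f$ is solvable, and $y$ the minimal-norm solution ($Ay=f$, $y\perp\mathcal N(A)$). Let $P:H\to H$ be bounded linear with $T:=PA$ selfadjoint, $T\ge0$, and $\mathcal N(T)=\mathcal N(A)$. Let $h>0$ be a constant with $h\|T\|<2$, and $u_0\in H$ with $u_0-y\perp\mathcal N(A)$. For $\delta>0$ let $f_\delta\in H$ with $\|f_\delta-f\|\le\delta$, and define $$u_{n+1}=u_n-hP(Au_n-f_\delta),\quad n\ge0,$$ starting from $u_0$ (the iterates depend on $\delta$). If positive integers $n_\delta$ satisfy $\lim_{\delta\to0}n_\delta h=\infty$ and $\lim_{\delta\to0}n_\delta h\delta=0$, then $\lim_{\delta\to0}\|u_{n_\delta}-y\|=0$. In particular this holds for $n_\delta=C/(h\delta^{\gamma})$ (rounded to an integer) with constants $C>0$, $\gamma\in(0,1)$.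
   Context: $\mathcal N(A)=\{u\in H:Au=0\}$. *)

theory Defs
  imports "HOL-Analysis.Analysis"
begin

definition null_space :: "('a::real_vector \<Rightarrow> 'b::real_vector) \<Rightarrow> 'a set" where
  "null_space A = {u. A u = 0}"

primrec lw_iter :: "('a::real_vector \<Rightarrow> 'a) \<Rightarrow> ('a \<Rightarrow> 'a) \<Rightarrow> real \<Rightarrow> 'a \<Rightarrow> 'a \<Rightarrow> nat \<Rightarrow> 'a" where
  "lw_iter P A h g u0 0 = u0"
| "lw_iter P A h g u0 (Suc n) =
     lw_iter P A h g u0 n - h *\<^sub>R P (A (lw_iter P A h g u0 n) - g)"

end

theory Submission imports Defs begin

locale lw =
  fixes A P :: "'a::{real_inner, complete_space} \<Rightarrow> 'a" and h :: real
  assumes A_lin: "bounded_linear A"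
    and P_lin: "bounded_linear P"
    and T_sa: "\<forall>u v. inner (P (A u)) v = inner u (P (A v))"
    and T_nonneg: "\<forall>u. 0 \<le> inner (P (A u)) u"
    and T_null: "null_space (P \<circ> A) = null_space A"
    and h_pos: "h > 0"
    and h_norm: "h * onorm (P \<circ> A) < 2"
begin

definition "M x = h *\<^sub>R P (A x)"
definition "S x = x - M x"
definition "c = (h * onorm (P \<circ> A) + 2) / 2"

lemma PA_lin: "bounded_linear (P \<circ> A)"
  using A_lin P_lin bounded_linear_compose[of P A] by (simp add: comp_def)

lemma c_props: "0 < c" "c < 2" "h * onorm (P \<circ> A) \<le> c"
proof -
  have "0 \<le> onorm (P \<circ> A)" using onorm_pos_le[OF PA_lin] .
  hence "0 \<le> h * onorm (P \<circ> A)" using h_pos by simp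
  thus "0 < c" "c < 2" "h * onorm (P \<circ> A) \<le> c" using h_norm unfolding c_def by auto
qed

lemma M_lin: "bounded_linear M"
proof -
  have "bounded_linear (\<lambda>x. h *\<^sub>R (P \<circ> A) x)"
    by (rule bounded_linear_const_scaleR[OF PA_lin])
  thus ?thesis unfolding M_def[abs_def] by (simp add: comp_def)
qed

lemma M_sa: "inner (M u) v = inner u (M v)"
  using T_sa by (simp add: M_def)

lemma M_nonneg: "0 \<le> inner (M u) u"
  using T_nonneg h_pos by (simp add: M_def)

lemma M_bound: "norm (M x) \<le> c * norm x"
proof -
  have "norm (M x) = h * norm ((P \<circ> A) x)" using h_pos by (simp add: M_def)
  also have "\<dots> \<le> h * (onorm (P \<circ> A) * norm x)"
    using onorm[OF PA_lin] h_pos by (simp add: mult_left_mono)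
  also have "\<dots> \<le> c * norm x" using c_props(3)
    by (metis mult.assoc mult_right_mono norm_ge_zero)
  finally show ?thesis .
qed

lemma M_quad: "inner (M y) y \<le> c * (norm y)\<^sup>2"
proof -
  have "inner (M y) y \<le> norm (M y) * norm y" by (rule norm_cauchy_schwarz)
  also have "\<dots> \<le> c * norm y * norm y" using M_bound by (simp add: mult_right_mono)
  finally show ?thesis by (simp add: power2_eq_square mult.assoc)
qed

lemma M_zero: "z \<in> null_space A \<Longrightarrow> M z = 0"
proof -
  interpret P: bounded_linear P by (rule P_lin)
  assume "z \<in> null_space A" thus ?thesis by (simp add: null_space_def M_def)
qed

lemma M_sq: "(norm (M x))\<^sup>2 \<le> c * inner (M x) x"
proof -
  interpret Ml: bounded_linear M by (rule M_lin)
  define y where "y = M x"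
  define t where "t = - 1 / c"
  have "0 \<le> inner (M (x + t *\<^sub>R y)) (x + t *\<^sub>R y)" by (rule M_nonneg)
  also have "\<dots> = inner (M x) x + t * inner (M x) y + t * inner (M y) x + t * t * inner (M y) y"
    by (simp add: Ml.add Ml.scale inner_add_left inner_add_right algebra_simps)
  also have "inner (M y) x = inner y y" using M_sa y_def by simp
  also have "inner (M x) y = inner y y" using y_def by simp
  finally have 1: "0 \<le> inner (M x) x + 2 * t * inner y y + t * t * inner (M y) y" by simp
  have "t * t * inner (M y) y \<le> t * t * (c * (norm y)\<^sup>2)"
    using M_quad by (simp add: mult_left_mono)
  also have "\<dots> = (norm y)\<^sup>2 / c" unfolding t_def using c_props(1)
    by (simp add: power2_eq_square field_simps)
  finally have 2: "t * t * inner (M y) y \<le> (norm y)\<^sup>2 / c" .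
  have 3: "2 * t * inner y y = - 2 * (norm y)\<^sup>2 / c"
    unfolding t_def by (simp add: power2_norm_eq_inner)
  from 1 2 3 have "(norm y)\<^sup>2 / c \<le> inner (M x) x" by linarith
  thus ?thesis using c_props(1) y_def by (simp add: field_simps)
qed

lemma S_norm: "(norm (S x))\<^sup>2 = (norm x)\<^sup>2 - 2 * inner (M x) x + (norm (M x))\<^sup>2"
  unfolding S_def power2_norm_eq_inner
  by (simp add: inner_diff_left inner_diff_right inner_commute[of x "M x"])

lemma S_decr: "(norm x)\<^sup>2 - (norm (S x))\<^sup>2 \<ge> (2 / c - 1) * (norm (M x))\<^sup>2"
proof -
  have a: "(norm (M x))\<^sup>2 / c \<le> inner (M x) x" using M_sq c_props(1) by (simp add: field_simps)
  have b: "(norm x)\<^sup>2 - (norm (S x))\<^sup>2 = 2 * inner (M x) x - (norm (M x))\<^sup>2" using S_norm[of x] by simp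
  have "(2 / c - 1) * (norm (M x))\<^sup>2 = 2 * ((norm (M x))\<^sup>2 / c) - (norm (M x))\<^sup>2"
    by (simp add: algebra_simps)
  thus ?thesis using a b by linarith
qed

lemma S_contr: "norm (S x) \<le> norm x"
proof -
  have "2 / c - 1 \<ge> 0" using c_props by (simp add: field_simps)
  hence "(2 / c - 1) * (norm (M x))\<^sup>2 \<ge> 0" by simp
  hence "(norm (S x))\<^sup>2 \<le> (norm x)\<^sup>2" using S_decr[of x] by linarith
  thus ?thesis using power2_le_imp_le by force
qed

lemma S_sa: "inner (S u) v = inner u (S v)"
  unfolding S_def by (simp add: inner_diff_left inner_diff_right M_sa)

lemma S_perp: "\<forall>z \<in> null_space A. inner x z = 0 \<Longrightarrow> \<forall>z \<in> null_space A. inner (S x) z = 0"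
  using S_sa M_zero by (metis S_def diff_zero)

lemma S_lin: "bounded_linear S"
  unfolding S_def[abs_def] using M_lin bounded_linear_sub[OF bounded_linear_ident M_lin] by simp

lemma norm_diff_sq_inner: "(norm (a - d))\<^sup>2 = inner a a - 2 * inner a d + inner d d"
proof -
  have "inner (a-d) (a-d) = inner a a - inner a d - inner d a + inner d d"
    by (simp add: inner_diff_left inner_diff_right)
  moreover have "inner d a = inner a d" by (rule inner_commute)
  ultimately show ?thesis by (simp add: power2_norm_eq_inner)
qed

lemma sq_to_0: fixes g :: "nat \<Rightarrow> 'b::real_normed_vector"
  assumes "(\<lambda>n. (norm (g n))\<^sup>2) \<longlonglongrightarrow> 0" shows "g \<longlonglongrightarrow> 0"
proof -
  have "(\<lambda>n. sqrt ((norm (g n))\<^sup>2)) \<longlonglongrightarrow> sqrt 0" by (rule tendsto_real_sqrt[OF assms])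
  hence "(\<lambda>n. norm (g n)) \<longlonglongrightarrow> 0" by simp
  thus ?thesis by (simp add: tendsto_norm_zero_iff)
qed

lemma S_conv:
  assumes perp: "\<forall>z\<in>null_space A. inner x0 z = 0"
  shows "(\<lambda>n. (S^^n) x0) \<longlonglongrightarrow> 0"
proof -
  define w where "w n = (S^^n) x0" for n
  have wS: "w (Suc n) = S (w n)" for n by (simp add: w_def)
  have wperp: "\<forall>z\<in>null_space A. inner (w n) z = 0" for n
    by (induction n) (simp_all add: wS S_perp perp w_def[of 0])
  define b where "b n = (norm (w n))\<^sup>2" for n
  have bdec: "decseq b"
    unfolding decseq_Suc_iff b_def wS using S_contr by (simp add: power_mono)
  have b0: "\<forall>i. 0 \<le> b i" by (simp add: b_def)
  obtain L where bL: "b \<longlonglongrightarrow> L" using decseq_convergent[OF bdec b0] by blast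
  have shift: "inner (w (m+k)) (w n) = inner (w m) (w (n+k))" for m n k
  proof (induction k arbitrary: m n)
    case 0 then show ?case by simp
  next
    case (Suc k)
    have "inner (w (m + Suc k)) (w n) = inner (w (Suc m + k)) (w n)" by simp
    also have "\<dots> = inner (w (Suc m)) (w (n+k))" by (rule Suc.IH)
    also have "\<dots> = inner (w m) (w (n + Suc k))" by (simp add: wS S_sa)
    finally show ?case .
  qed
  have ie1: "inner (w (2*m)) (w (2*n)) = b (m+n)" if "m \<le> n" for m n
  proof -
    have "inner (w (2*m + (n-m))) (w (m+n)) = inner (w (2*m)) (w (m+n+(n-m)))" by (rule shift)
    moreover have "2*m + (n-m) = m+n" "m+n+(n-m) = 2*n" using that by auto
    ultimately show ?thesis by (simp add: b_def power2_norm_eq_inner)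
  qed
  have ie: "inner (w (2*m)) (w (2*n)) = b (m+n)" for m n
  proof (cases "m \<le> n")
    case True then show ?thesis using ie1 by simp
  next
    case False then show ?thesis using ie1[of n m] by (simp add: inner_commute add.commute)
  qed
  have dsq: "(norm (w (2*m) - w (2*n)))\<^sup>2 = b (2*m) + b (2*n) - 2 * b (m+n)" for m n
  proof -
    have e1: "b (2*m) = inner (w (2*m)) (w (2*m))" "b (2*n) = inner (w (2*n)) (w (2*n))"
      by (simp_all add: b_def power2_norm_eq_inner)
    have e2: "inner (w (2*m)) (w (2*n)) = b (m+n)" by (rule ie)
    have "(norm (w (2*m) - w (2*n)))\<^sup>2 = inner (w (2*m)) (w (2*m)) - 2 * inner (w (2*m)) (w (2*n)) + inner (w (2*n)) (w (2*n))"
      by (rule norm_diff_sq_inner)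
    also have "\<dots> = b (2*m) + b (2*n) - 2 * b (m+n)" by (simp only: e1 e2) 
    finally show ?thesis .
  qed
  have cau: "Cauchy (\<lambda>n. w (2*n))"
  proof (rule CauchyI)
    fix e :: real assume e: "0 < e"
    hence "e\<^sup>2 / 4 > 0" by simp
    then obtain N where N: "\<forall>k\<ge>N. dist (b k) L < e\<^sup>2 / 4"
      using bL unfolding lim_sequentially by blast
    have "norm (w (2*m) - w (2*n)) < e" if "m \<ge> N" "n \<ge> N" for m n
    proof -
      have "\<bar>b (2*m) - L\<bar> < e\<^sup>2/4" "\<bar>b (2*n) - L\<bar> < e\<^sup>2/4" "\<bar>b (m+n) - L\<bar> < e\<^sup>2/4"
        using N that by (auto simp: dist_real_def)
      hence "(norm (w (2*m) - w (2*n)))\<^sup>2 < e\<^sup>2" using dsq[of m n] by linarith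
      thus ?thesis using e power_less_imp_less_base[of "norm (w (2*m) - w (2*n))" 2 e] by simp
    qed
    thus "\<exists>M. \<forall>m\<ge>M. \<forall>n\<ge>M. norm (w (2*m) - w (2*n)) < e" by blast
  qed
  then obtain z where z: "(\<lambda>n. w (2*n)) \<longlonglongrightarrow> z"
    unfolding Cauchy_convergent_iff convergent_def by blast
  have zperp: "inner z q = 0" if q: "q \<in> null_space A" for q
  proof -
    have "(\<lambda>n. inner (w (2*n)) q) \<longlonglongrightarrow> inner z q" by (rule tendsto_inner[OF z tendsto_const])
    moreover have "(\<lambda>n. inner (w (2*n)) q) = (\<lambda>n. 0)" using wperp q by blast
    ultimately have "(\<lambda>n. 0) \<longlonglongrightarrow> inner z q" by simp
    thus ?thesis using LIMSEQ_unique[OF tendsto_const] by metis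
  qed
  have c2: "2 / c - 1 > 0" using c_props by (simp add: field_simps)
  have Mw_sq: "(\<lambda>n. (norm (M (w n)))\<^sup>2) \<longlonglongrightarrow> 0"
  proof (rule tendsto_sandwich[of "\<lambda>n. 0" _ _ "\<lambda>n. (b n - b (Suc n)) / (2 / c - 1)"])
    show "\<forall>\<^sub>F n in sequentially. 0 \<le> (norm (M (w n)))\<^sup>2" by simp
    have "(norm (M (w n)))\<^sup>2 \<le> (b n - b (Suc n)) / (2 / c - 1)" for n
    proof -
      have "(2/c-1) * (norm (M (w n)))\<^sup>2 \<le> b n - b (Suc n)" using S_decr[of "w n"] by (simp add: b_def wS)
      thus ?thesis using c2 by (simp add: pos_le_divide_eq mult_ac)
    qed
    thus "\<forall>\<^sub>F n in sequentially. (norm (M (w n)))\<^sup>2 \<le> (b n - b (Suc n)) / (2 / c - 1)" by simp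
    show "(\<lambda>n. 0) \<longlonglongrightarrow> (0::real)" by simp
    have "(\<lambda>n. (b n - b (Suc n)) / (2 / c - 1)) \<longlonglongrightarrow> (L - L) / (2 / c - 1)"
      by (intro tendsto_divide tendsto_diff bL LIMSEQ_Suc[OF bL] tendsto_const) (use c2 c_props(1) in auto)
    thus "(\<lambda>n. (b n - b (Suc n)) / (2 / c - 1)) \<longlonglongrightarrow> 0" by simp
  qed
  have Mw: "(\<lambda>n. M (w n)) \<longlonglongrightarrow> 0" by (rule sq_to_0[OF Mw_sq])
  have sm: "strict_mono (\<lambda>n::nat. 2*n)" by (simp add: strict_mono_def)
  have "(\<lambda>n. M (w (2*n))) \<longlonglongrightarrow> 0"
    using LIMSEQ_subseq_LIMSEQ[OF Mw sm] by (simp add: o_def)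
  moreover have "(\<lambda>n. M (w (2*n))) \<longlonglongrightarrow> M z"
    using bounded_linear.tendsto[OF M_lin z] .
  ultimately have "M z = 0" using LIMSEQ_unique by blast
  hence "P (A z) = 0" using h_pos by (simp add: M_def)
  hence "z \<in> null_space (P \<circ> A)" by (simp add: null_space_def)
  hence "z \<in> null_space A" using T_null by simp
  hence "inner z z = 0" using zperp by blast
  hence z0: "z = 0" by simp
  have "(\<lambda>n. b (2*n)) \<longlonglongrightarrow> (norm z)\<^sup>2" unfolding b_def by (intro tendsto_power tendsto_norm z)
  moreover have "(\<lambda>n. b (2*n)) \<longlonglongrightarrow> L" using LIMSEQ_subseq_LIMSEQ[OF bL sm] by (simp add: o_def)
  ultimately have "L = 0" using z0 LIMSEQ_unique by fastforce
  hence "(\<lambda>n. (norm (w n))\<^sup>2) \<longlonglongrightarrow> 0" using bL by (simp add: b_def[abs_def])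
  hence "w \<longlonglongrightarrow> 0" by (rule sq_to_0)
  thus ?thesis by (simp add: w_def[abs_def])
qed

lemma iter_nf:
  assumes "A y = f"
  shows "lw_iter P A h f u0 n - y = (S^^n) (u0 - y)"
proof (induction n)
  case 0 then show ?case by simp
next
  case (Suc n)
  interpret Al: bounded_linear A by (rule A_lin)
  have "A (lw_iter P A h f u0 n) - f = A (lw_iter P A h f u0 n - y)" using assms by (simp add: Al.diff)
  hence "lw_iter P A h f u0 (Suc n) - y = S (lw_iter P A h f u0 n - y)"
    by (simp add: S_def M_def algebra_simps)
  thus ?case using Suc.IH by simp
qed

lemma iter_diff:
  "norm (lw_iter P A h g u0 n - lw_iter P A h f u0 n) \<le> real n * h * onorm P * norm (g - f)"
proof (induction n)
  case 0 then show ?case by simp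
next
  case (Suc n)
  interpret Al: bounded_linear A by (rule A_lin)
  interpret Pl: bounded_linear P by (rule P_lin)
  define D where "D = lw_iter P A h g u0 n - lw_iter P A h f u0 n"
  have eq: "lw_iter P A h g u0 (Suc n) - lw_iter P A h f u0 (Suc n) = S D + h *\<^sub>R P (g - f)"
    unfolding D_def by (simp add: S_def M_def Al.diff Pl.diff Pl.add algebra_simps scaleR_diff_right)
  have "norm (S D + h *\<^sub>R P (g - f)) \<le> norm (S D) + norm (h *\<^sub>R P (g - f))" by (rule norm_triangle_ineq)
  also have "norm (S D) \<le> norm D" by (rule S_contr)
  also have "norm (h *\<^sub>R P (g - f)) = h * norm (P (g - f))" using h_pos by simp
  also have "h * norm (P (g - f)) \<le> h * (onorm P * norm (g - f))"
    using onorm[OF P_lin] h_pos by (simp add: mult_left_mono)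
  also have "norm D \<le> real n * h * onorm P * norm (g - f)" using Suc.IH D_def by simp
  finally have "norm (S D + h *\<^sub>R P (g - f)) \<le> real n * h * onorm P * norm (g - f) + h * (onorm P * norm (g - f))"
    by simp
  also have "\<dots> = real (Suc n) * h * onorm P * norm (g - f)" by (simp add: algebra_simps)
  finally show ?case using eq by simp
qed

end

lemma nat_tendsto_from_real:
  fixes nd :: "real \<Rightarrow> nat"
  assumes "filterlim (\<lambda>\<delta>. real (nd \<delta>) * h) at_top F" "h > 0"
  shows "filterlim nd at_top F"
  unfolding filterlim_at_top
proof
  fix Z :: nat
  have "\<forall>\<^sub>F x in F. real Z * h \<le> real (nd x) * h" using assms(1) unfolding filterlim_at_top by blast
  thus "\<forall>\<^sub>F x in F. Z \<le> nd x"
    by (rule eventually_mono) (use assms(2) in simp)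
qed

theorem theorem4:
  fixes A P :: "'a::{real_inner, complete_space} \<Rightarrow> 'a"
    and f y u0 :: 'a and h :: real and fd :: "real \<Rightarrow> 'a"
  assumes A_lin: "bounded_linear A"
    and P_lin: "bounded_linear P"
    and y_sol: "A y = f"
    and y_perp: "\<forall>z \<in> null_space A. inner y z = 0"
    and T_sa: "\<forall>u v. inner (P (A u)) v = inner u (P (A v))"
    and T_nonneg: "\<forall>u. 0 \<le> inner (P (A u)) u"
    and T_null: "null_space (P \<circ> A) = null_space A"
    and h_pos: "h > 0"
    and h_norm: "h * onorm (P \<circ> A) < 2"
    and u0_perp: "\<forall>z \<in> null_space A. inner (u0 - y) z = 0"
    and fd_close: "\<forall>\<delta>>0. norm (fd \<delta> - f) \<le> \<delta>"
  shows "(\<forall>nd :: real \<Rightarrow> nat.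
            (\<forall>\<delta>>0. nd \<delta> > 0) \<and>
            filterlim (\<lambda>\<delta>. real (nd \<delta>) * h) at_top (at_right 0) \<and>
            ((\<lambda>\<delta>. real (nd \<delta>) * h * \<delta>) \<longlongrightarrow> 0) (at_right 0)
          \<longrightarrow> ((\<lambda>\<delta>. norm (lw_iter P A h (fd \<delta>) u0 (nd \<delta>) - y)) \<longlongrightarrow> 0) (at_right 0))
       \<and> (\<forall>C \<gamma>. C > 0 \<and> 0 < \<gamma> \<and> \<gamma> < 1 \<longrightarrow>
            ((\<lambda>\<delta>. norm (lw_iter P A h (fd \<delta>) u0 (nat \<lceil>C / (h * \<delta> powr \<gamma>)\<rceil>) - y))
               \<longlongrightarrow> 0) (at_right 0))"
proof -
  interpret lw A P h
    using A_lin P_lin T_sa T_nonneg T_null h_pos h_norm unfolding lw_def by blast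
  have seq: "(\<lambda>n. norm (lw_iter P A h f u0 n - y)) \<longlonglongrightarrow> 0"
  proof -
    have "(\<lambda>n. (S^^n) (u0 - y)) \<longlonglongrightarrow> 0" by (rule S_conv[OF u0_perp])
    hence "(\<lambda>n. norm ((S^^n) (u0 - y))) \<longlonglongrightarrow> 0" by (simp add: tendsto_norm_zero_iff)
    thus ?thesis using iter_nf[OF y_sol] by simp
  qed
  have part1: "((\<lambda>\<delta>. norm (lw_iter P A h (fd \<delta>) u0 (nd \<delta>) - y)) \<longlongrightarrow> 0) (at_right 0)"
    if nd1: "filterlim (\<lambda>\<delta>. real (nd \<delta>) * h) at_top (at_right 0)"
      and nd2: "((\<lambda>\<delta>. real (nd \<delta>) * h * \<delta>) \<longlongrightarrow> 0) (at_right 0)" for nd :: "real \<Rightarrow> nat"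
  proof (rule tendsto_sandwich[of "\<lambda>_. 0" _ _
        "\<lambda>\<delta>. norm (lw_iter P A h f u0 (nd \<delta>) - y) + real (nd \<delta>) * h * \<delta> * onorm P"])
    show "\<forall>\<^sub>F \<delta> in at_right 0. 0 \<le> norm (lw_iter P A h (fd \<delta>) u0 (nd \<delta>) - y)" by simp
    show "((\<lambda>_. 0) \<longlongrightarrow> (0::real)) (at_right 0)" by simp
    have ndl: "filterlim nd at_top (at_right 0)" by (rule nat_tendsto_from_real[OF nd1 h_pos])
    have t1: "((\<lambda>\<delta>. norm (lw_iter P A h f u0 (nd \<delta>) - y)) \<longlongrightarrow> 0) (at_right 0)"
      using filterlim_compose[OF seq ndl] .
    have t2: "((\<lambda>\<delta>. real (nd \<delta>) * h * \<delta> * onorm P) \<longlongrightarrow> 0 * onorm P) (at_right 0)"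
      by (rule tendsto_mult_right[OF nd2])
    show "((\<lambda>\<delta>. norm (lw_iter P A h f u0 (nd \<delta>) - y) + real (nd \<delta>) * h * \<delta> * onorm P) \<longlongrightarrow> 0) (at_right 0)"
      using tendsto_add[OF t1 t2] by simp
    show "\<forall>\<^sub>F \<delta> in at_right 0. norm (lw_iter P A h (fd \<delta>) u0 (nd \<delta>) - y)
        \<le> norm (lw_iter P A h f u0 (nd \<delta>) - y) + real (nd \<delta>) * h * \<delta> * onorm P"
      using eventually_at_right_less[of "0::real"]
    proof (rule eventually_mono)
      fix \<delta> :: real assume d: "0 < \<delta>"
      let ?u = "lw_iter P A h (fd \<delta>) u0 (nd \<delta>)" and ?w = "lw_iter P A h f u0 (nd \<delta>)"
      have "norm (?u - y) \<le> norm (?w - y) + norm (?u - ?w)"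
        using norm_triangle_ineq[of "?w - y" "?u - ?w"] by simp
      also have "norm (?u - ?w) \<le> real (nd \<delta>) * h * onorm P * norm (fd \<delta> - f)" by (rule iter_diff)
      also have "\<dots> \<le> real (nd \<delta>) * h * onorm P * \<delta>"
        using fd_close d h_pos onorm_pos_le[OF P_lin] by (simp add: mult_left_mono)
      finally show "norm (?u - y) \<le> norm (?w - y) + real (nd \<delta>) * h * \<delta> * onorm P"
        by (simp add: mult_ac)
    qed
  qed
  have part2: "((\<lambda>\<delta>. norm (lw_iter P A h (fd \<delta>) u0 (nat \<lceil>C / (h * \<delta> powr \<gamma>)\<rceil>) - y)) \<longlongrightarrow> 0) (at_right 0)"
    if C: "C > 0" and g: "0 < \<gamma>" "\<gamma> < 1" for C \<gamma> :: real
  proof -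
    define nd where "nd \<delta> = nat \<lceil>C / (h * \<delta> powr \<gamma>)\<rceil>" for \<delta> :: real
    have lo: "C / \<delta> powr \<gamma> \<le> real (nd \<delta>) * h" if d: "0 < \<delta>" for \<delta>
    proof -
      have "C / (h * \<delta> powr \<gamma>) \<le> real (nd \<delta>)" unfolding nd_def by linarith
      thus ?thesis using h_pos d by (simp add: field_simps)
    qed
    have hi: "real (nd \<delta>) * h * \<delta> \<le> C * \<delta> powr (1 - \<gamma>) + h * \<delta>" if d: "0 < \<delta>" for \<delta>
    proof -
      have pos: "0 < C / (h * \<delta> powr \<gamma>)" using C h_pos d by simp
      have "real (nd \<delta>) \<le> C / (h * \<delta> powr \<gamma>) + 1" unfolding nd_def using pos by linarith
      hence "real (nd \<delta>) * h * \<delta> \<le> (C / (h * \<delta> powr \<gamma>) + 1) * h * \<delta>"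
        using h_pos d by (simp add: mult_right_mono)
      also have "\<dots> = C * (\<delta> / \<delta> powr \<gamma>) + h * \<delta>" using h_pos d by (simp add: field_simps)
      also have "\<delta> / \<delta> powr \<gamma> = \<delta> powr (1 - \<gamma>)" using d by (simp add: powr_diff)
      finally show ?thesis .
    qed
    have id0: "((\<lambda>\<delta>::real. \<delta>) \<longlongrightarrow> 0) (at_right 0)" by (rule tendsto_ident_at)
    have ev0: "\<forall>\<^sub>F \<delta> in at_right (0::real). 0 < \<delta>" by (rule eventually_at_right_less)
    have pg: "((\<lambda>\<delta>::real. \<delta> powr \<gamma>) \<longlongrightarrow> 0) (at_right 0)"
      by (rule tendsto_zero_powrI[OF id0 tendsto_const]) (use ev0 g in \<open>auto elim: eventually_mono\<close>)
    have pg1: "((\<lambda>\<delta>::real. \<delta> powr (1 - \<gamma>)) \<longlongrightarrow> 0) (at_right 0)"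
      by (rule tendsto_zero_powrI[OF id0 tendsto_const]) (use ev0 g in \<open>auto elim: eventually_mono\<close>)
    have c1: "filterlim (\<lambda>\<delta>. real (nd \<delta>) * h) at_top (at_right 0)"
    proof (rule filterlim_at_top_mono)
      show "filterlim (\<lambda>\<delta>::real. C / \<delta> powr \<gamma>) at_top (at_right 0)"
        by (rule LIM_at_top_divide[OF tendsto_const C pg]) (use ev0 in \<open>auto elim: eventually_mono\<close>)
      show "\<forall>\<^sub>F \<delta> in at_right 0. C / \<delta> powr \<gamma> \<le> real (nd \<delta>) * h"
        using ev0 by (rule eventually_mono) (rule lo)
    qed
    have c2: "((\<lambda>\<delta>. real (nd \<delta>) * h * \<delta>) \<longlongrightarrow> 0) (at_right 0)"
    proof (rule tendsto_sandwich[of "\<lambda>_. 0" _ _ "\<lambda>\<delta>. C * \<delta> powr (1 - \<gamma>) + h * \<delta>"])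
      show "\<forall>\<^sub>F \<delta> in at_right 0. 0 \<le> real (nd \<delta>) * h * \<delta>"
        using ev0 by (rule eventually_mono) (use h_pos in simp)
      show "\<forall>\<^sub>F \<delta> in at_right 0. real (nd \<delta>) * h * \<delta> \<le> C * \<delta> powr (1 - \<gamma>) + h * \<delta>"
        using ev0 by (rule eventually_mono) (rule hi)
      show "((\<lambda>_. 0) \<longlongrightarrow> (0::real)) (at_right 0)" by simp
      have "((\<lambda>\<delta>. C * \<delta> powr (1 - \<gamma>) + h * \<delta>) \<longlongrightarrow> C * 0 + h * 0) (at_right 0)"
        by (intro tendsto_add tendsto_mult tendsto_const pg1 id0)
      thus "((\<lambda>\<delta>. C * \<delta> powr (1 - \<gamma>) + h * \<delta>) \<longlongrightarrow> 0) (at_right 0)" by simp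
    qed
    show ?thesis using part1[OF c1 c2] unfolding nd_def .
  qed
  show ?thesis using part1 part2 by blast
qed

end
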